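(* Let $G$ be a finite group and $G_-$ a subgroup of $G$. (I) Let $G_+$ be a subgroup such that $G=G_+G_-$ is a unique factorization, and let $\xi,\eta:G_+\to G_-$ be group homomorphisms such that $G_+'=\{u\xi(u^{-1}):u\in G_+\}$ and $G_+''=\{\eta(u^{-1})u:u\in G_+\}$ are normal subgroups of $G$ and $G_+'\to G_+''$, $u\xi(u^{-1})\mapsto \eta(u)u^{-1}$, is a well-defined group isomorphism. Put $A=G_+'$. Then $G$ is the internal semidirect product $A\rtimes G_-$ (with $G_-$ acting on $A$ by conjugation), the map $\zeta:A\to G_-$, $\zeta(u\xi(u^{-1}))=\xi(u)$, is a well-defined 1-cycle, and $F:G\to G$, $F(u\xi(u^{-1})x)=\eta(u)u^{-1}x$ ($u\in G_+$, $x\in G_-$), is a well-defined automorphism of $G$ satisfying (a) $F(x)=x$ for all $x\in G_-$ and (b) $F(a)a\in G_-$ for all $a\in A$. (II) Conversely, let $G_-$ act on a group $A$ by automorphisms, with $A\rtimes G_-$ finite, let $\zeta:A\to G_-$ be a 1-cycle and let $F$ be an automorphism of $A\rtimes G_-$ satisfying (a) and (b) above. Let $P:A\rtimes G_-\to G_-$, $ax\mapsto x$. Then $G_+=\{a\zeta(a):a\in A\}$ is a subgroup with $A\rtimes G_-=G_+G_-$ a unique factorization, and $\xi=P|_{G_+}$, $\eta=(P\circ F^{-1})|_{G_+}$ are group homomorphisms $G_+\to G_-$ satisfying the hypotheses of (I). (III) The constructions (I) and (II) are inverse to each other, giving a one-to-one correspondence between triples $(G=G_+G_-,\xi,\eta)$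 as in (I) and triples $(A\rtimes G_-,\zeta,F)$ as in (II).
   Context: A unique factorization $G=G_+G_-$ consists of subgroups $G_+,G_-$ such that every $g\in G$ is uniquely $g=g_+g_-$ with $g_+\in G_+$, $g_-\in G_-$. If a group $G_-$ acts on a group $A$ by automorphisms, $(x,a)\mapsto x\cdot a$, the semidirect product $A\rtimes G_-$ has elements $ax$ ($a\in A$, $x\in G_-$) with product $(ax)(by)=a(x\cdot b)xy$. A map $\zeta:A\to G_-$ is a 1-cycle if $\zeta(a)\zeta(b)=\zeta\big(a\,(\zeta(a)\cdot b)\big)$ for all $a,b\in A$. *)

theory Defs
  imports "HOL-Algebra.Algebra"
begin

definition unique_factorization ::
  "('g, 'm) monoid_scheme \<Rightarrow> 'g set \<Rightarrow> 'g set \<Rightarrow> bool" where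
  "unique_factorization G Gp Gm \<longleftrightarrow>
     subgroup Gp G \<and> subgroup Gm G \<and>
     (\<forall>g\<in>carrier G. \<exists>!p. p \<in> Gp \<times> Gm \<and> g = fst p \<otimes>\<^bsub>G\<^esub> snd p)"

definition plus1 :: "('g, 'm) monoid_scheme \<Rightarrow> 'g set \<Rightarrow> ('g \<Rightarrow> 'g) \<Rightarrow> 'g set" where
  "plus1 G Gp \<xi> = {u \<otimes>\<^bsub>G\<^esub> \<xi> (inv\<^bsub>G\<^esub> u) | u. u \<in> Gp}"

definition plus2 :: "('g, 'm) monoid_scheme \<Rightarrow> 'g set \<Rightarrow> ('g \<Rightarrow> 'g) \<Rightarrow> 'g set" where
  "plus2 G Gp \<eta> = {\<eta> (inv\<^bsub>G\<^esub> u) \<otimes>\<^bsub>G\<^esub> u | u. u \<in> Gp}"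

definition factorization_triple ::
  "('g, 'm) monoid_scheme \<Rightarrow> 'g set \<Rightarrow> 'g set \<Rightarrow> ('g \<Rightarrow> 'g) \<Rightarrow> ('g \<Rightarrow> 'g) \<Rightarrow> bool" where
  "factorization_triple G Gp Gm \<xi> \<eta> \<longleftrightarrow>
     group G \<and> finite (carrier G) \<and> subgroup Gm G \<and>
     unique_factorization G Gp Gm \<and>
     \<xi> \<in> hom (G\<lparr>carrier := Gp\<rparr>) (G\<lparr>carrier := Gm\<rparr>) \<and>
     \<eta> \<in> hom (G\<lparr>carrier := Gp\<rparr>) (G\<lparr>carrier := Gm\<rparr>) \<and>
     plus1 G Gp \<xi> \<lhd> G \<and> plus2 G Gp \<eta> \<lhd> G \<and>
     (\<exists>f. f \<in> iso (G\<lparr>carrier := plus1 G Gp \<xi>\<rparr>) (G\<lparr>carrier := plus2 G Gp \<eta>\<rparr>) \<and>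
          (\<forall>u\<in>Gp. f (u \<otimes>\<^bsub>G\<^esub> \<xi> (inv\<^bsub>G\<^esub> u)) = \<eta> u \<otimes>\<^bsub>G\<^esub> inv\<^bsub>G\<^esub> u))"

definition zeta_eq :: "('g, 'm) monoid_scheme \<Rightarrow> 'g set \<Rightarrow> ('g \<Rightarrow> 'g) \<Rightarrow> ('g \<Rightarrow> 'g) \<Rightarrow> bool" where
  "zeta_eq G Gp \<xi> \<zeta> \<longleftrightarrow> (\<forall>u\<in>Gp. \<zeta> (u \<otimes>\<^bsub>G\<^esub> \<xi> (inv\<^bsub>G\<^esub> u)) = \<xi> u)"

definition F_eq :: "('g, 'm) monoid_scheme \<Rightarrow> 'g set \<Rightarrow> 'g set \<Rightarrow> ('g \<Rightarrow> 'g) \<Rightarrow> ('g \<Rightarrow> 'g)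
    \<Rightarrow> ('g \<Rightarrow> 'g) \<Rightarrow> bool" where
  "F_eq G Gp Gm \<xi> \<eta> F \<longleftrightarrow>
     (\<forall>u\<in>Gp. \<forall>x\<in>Gm. F (u \<otimes>\<^bsub>G\<^esub> \<xi> (inv\<^bsub>G\<^esub> u) \<otimes>\<^bsub>G\<^esub> x) = \<eta> u \<otimes>\<^bsub>G\<^esub> inv\<^bsub>G\<^esub> u \<otimes>\<^bsub>G\<^esub> x)"

definition conjg :: "('g, 'm) monoid_scheme \<Rightarrow> 'g \<Rightarrow> 'g \<Rightarrow> 'g" where
  "conjg G x a = x \<otimes>\<^bsub>G\<^esub> a \<otimes>\<^bsub>G\<^esub> inv\<^bsub>G\<^esub> x"

definition action_by_aut ::
  "('h, 'n) monoid_scheme \<Rightarrow> ('a, 'm) monoid_scheme \<Rightarrow> ('h \<Rightarrow> 'a \<Rightarrow> 'a) \<Rightarrow> bool" where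
  "action_by_aut H A \<phi> \<longleftrightarrow>
     group H \<and> group A \<and>
     (\<forall>x\<in>carrier H. \<phi> x \<in> iso A A) \<and>
     (\<forall>a\<in>carrier A. \<phi> \<one>\<^bsub>H\<^esub> a = a) \<and>
     (\<forall>x\<in>carrier H. \<forall>y\<in>carrier H. \<forall>a\<in>carrier A. \<phi> (x \<otimes>\<^bsub>H\<^esub> y) a = \<phi> x (\<phi> y a))"

text \<open>External semidirect product A \<rtimes> H; the element (a,x) stands for ax,
  and (a x)(b y) = a (x.b) x y.\<close>
definition semidirect ::
  "('a, 'm) monoid_scheme \<Rightarrow> ('h, 'n) monoid_scheme \<Rightarrow> ('h \<Rightarrow> 'a \<Rightarrow> 'a) \<Rightarrow> ('a \<times> 'h) monoid" where
  "semidirect A H \<phi> =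
    \<lparr>carrier = carrier A \<times> carrier H,
     monoid.mult = (\<lambda>(a, x) (b, y). (a \<otimes>\<^bsub>A\<^esub> \<phi> x b, x \<otimes>\<^bsub>H\<^esub> y)),
     one = (\<one>\<^bsub>A\<^esub>, \<one>\<^bsub>H\<^esub>)\<rparr>"

definition inA :: "('a, 'm) monoid_scheme \<Rightarrow> ('h, 'n) monoid_scheme \<Rightarrow> 'a \<Rightarrow> 'a \<times> 'h" where
  "inA A H a = (a, \<one>\<^bsub>H\<^esub>)"

definition inH :: "('a, 'm) monoid_scheme \<Rightarrow> ('h, 'n) monoid_scheme \<Rightarrow> 'h \<Rightarrow> 'a \<times> 'h" where
  "inH A H x = (\<one>\<^bsub>A\<^esub>, x)"

definition one_cycle ::
  "('a, 'm) monoid_scheme \<Rightarrow> ('h, 'n) monoid_scheme \<Rightarrow> ('h \<Rightarrow> 'a \<Rightarrow> 'a) \<Rightarrow> ('a \<Rightarrow> 'h) \<Rightarrow> bool" where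
  "one_cycle A H \<phi> \<zeta> \<longleftrightarrow>
     \<zeta> \<in> carrier A \<rightarrow> carrier H \<and>
     (\<forall>a\<in>carrier A. \<forall>b\<in>carrier A. \<zeta> a \<otimes>\<^bsub>H\<^esub> \<zeta> b = \<zeta> (a \<otimes>\<^bsub>A\<^esub> \<phi> (\<zeta> a) b))"

text \<open>The hypotheses of part (II).  Inside A \<rtimes> H, the subgroup G_- is
  inH ` carrier H and A is inA ` carrier A.\<close>
definition cycle_triple ::
  "('a, 'm) monoid_scheme \<Rightarrow> ('h, 'n) monoid_scheme \<Rightarrow> ('h \<Rightarrow> 'a \<Rightarrow> 'a) \<Rightarrow> ('a \<Rightarrow> 'h)
    \<Rightarrow> ('a \<times> 'h \<Rightarrow> 'a \<times> 'h) \<Rightarrow> bool" where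
  "cycle_triple A H \<phi> \<zeta> F \<longleftrightarrow>
     action_by_aut H A \<phi> \<and> finite (carrier (semidirect A H \<phi>)) \<and>
     one_cycle A H \<phi> \<zeta> \<and>
     F \<in> iso (semidirect A H \<phi>) (semidirect A H \<phi>) \<and>
     (\<forall>x\<in>carrier H. F (inH A H x) = inH A H x) \<and>
     (\<forall>a\<in>carrier A. F (inA A H a) \<otimes>\<^bsub>semidirect A H \<phi>\<^esub> inA A H a \<in> inH A H ` carrier H)"

definition Gminus_of :: "('a, 'm) monoid_scheme \<Rightarrow> ('h, 'n) monoid_scheme \<Rightarrow> ('a \<times> 'h) set" where
  "Gminus_of A H = inH A H ` carrier H"

definition Gplus_of ::
  "('a, 'm) monoid_scheme \<Rightarrow> ('h, 'n) monoid_scheme \<Rightarrow> ('h \<Rightarrow> 'a \<Rightarrow> 'a) \<Rightarrow> ('a \<Rightarrow> 'h) \<Rightarrow> ('a \<times> 'h) set" where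
  "Gplus_of A H \<phi> \<zeta> = {inA A H a \<otimes>\<^bsub>semidirect A H \<phi>\<^esub> inH A H (\<zeta> a) | a. a \<in> carrier A}"

text \<open>P : ax \<mapsto> x, viewed as a map into the subgroup G_- of A \<rtimes> H.\<close>
definition P_of :: "('a, 'm) monoid_scheme \<Rightarrow> ('h, 'n) monoid_scheme \<Rightarrow> 'a \<times> 'h \<Rightarrow> 'a \<times> 'h" where
  "P_of A H s = inH A H (snd s)"

definition xi_of :: "('a, 'm) monoid_scheme \<Rightarrow> ('h, 'n) monoid_scheme \<Rightarrow> 'a \<times> 'h \<Rightarrow> 'a \<times> 'h" where
  "xi_of A H = P_of A H"

definition eta_of ::
  "('a, 'm) monoid_scheme \<Rightarrow> ('h, 'n) monoid_scheme \<Rightarrow> ('h \<Rightarrow> 'a \<Rightarrow> 'a)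
    \<Rightarrow> ('a \<times> 'h \<Rightarrow> 'a \<times> 'h) \<Rightarrow> 'a \<times> 'h \<Rightarrow> 'a \<times> 'h" where
  "eta_of A H \<phi> F = P_of A H \<circ> inv_into (carrier (semidirect A H \<phi>)) F"

end

theory Submission
  imports Defs
begin

lemma (in group) canc1[simp]: "x \<in> carrier G \<Longrightarrow> y \<in> carrier G \<Longrightarrow> inv x \<otimes> (x \<otimes> y) = y"
  by (simp flip: m_assoc)
lemma (in group) canc2[simp]: "x \<in> carrier G \<Longrightarrow> y \<in> carrier G \<Longrightarrow> x \<otimes> (inv x \<otimes> y) = y"
  by (simp flip: m_assoc)


locale act =
  fixes A :: "('a, 'b) monoid_scheme" and H :: "('h, 'c) monoid_scheme" and \<phi>
  assumes act: "action_by_aut H A \<phi>"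
begin

lemma grpA: "group A" and grpH: "group H"
  using act by (auto simp: action_by_aut_def)

sublocale A: group A by (rule grpA)
sublocale H: group H by (rule grpH)

lemma phi_hom: "x \<in> carrier H \<Longrightarrow> \<phi> x \<in> hom A A"
  using act by (auto simp: action_by_aut_def iso_def)

lemma phi_closed[simp]: "x \<in> carrier H \<Longrightarrow> a \<in> carrier A \<Longrightarrow> \<phi> x a \<in> carrier A"
  by (rule hom_in_carrier[OF phi_hom])

lemma phi_mult[simp]: "x \<in> carrier H \<Longrightarrow> a \<in> carrier A \<Longrightarrow> b \<in> carrier A \<Longrightarrow>
   \<phi> x (a \<otimes>\<^bsub>A\<^esub> b) = \<phi> x a \<otimes>\<^bsub>A\<^esub> \<phi> x b"
  using phi_hom by (auto simp: hom_def)

lemma phi_one[simp]: "x \<in> carrier H \<Longrightarrow> \<phi> x \<one>\<^bsub>A\<^esub> = \<one>\<^bsub>A\<^esub>"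
  by (metis A.l_cancel_one' A.one_closed A.r_one phi_closed phi_mult)

lemma phi_inv[simp]: "x \<in> carrier H \<Longrightarrow> a \<in> carrier A \<Longrightarrow> \<phi> x (inv\<^bsub>A\<^esub> a) = inv\<^bsub>A\<^esub> (\<phi> x a)"
  by (metis A.inv_closed A.inv_equality A.l_inv phi_closed phi_mult phi_one)

lemma phi_1[simp]: "a \<in> carrier A \<Longrightarrow> \<phi> \<one>\<^bsub>H\<^esub> a = a"
  using act by (auto simp: action_by_aut_def)

lemma phi_comp: "x \<in> carrier H \<Longrightarrow> y \<in> carrier H \<Longrightarrow> a \<in> carrier A \<Longrightarrow> \<phi> (x \<otimes>\<^bsub>H\<^esub> y) a = \<phi> x (\<phi> y a)"
  using act by (auto simp: action_by_aut_def)

abbreviation "S \<equiv> semidirect A H \<phi>"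

lemma S_carrier: "carrier S = carrier A \<times> carrier H"
  by (simp add: semidirect_def)
lemma S_mult[simp]: "(a, x) \<otimes>\<^bsub>S\<^esub> (b, y) = (a \<otimes>\<^bsub>A\<^esub> \<phi> x b, x \<otimes>\<^bsub>H\<^esub> y)"
  by (simp add: semidirect_def)
lemma S_one: "\<one>\<^bsub>S\<^esub> = (\<one>\<^bsub>A\<^esub>, \<one>\<^bsub>H\<^esub>)"
  by (simp add: semidirect_def)
lemma S_mem[simp]: "(a, x) \<in> carrier S \<longleftrightarrow> a \<in> carrier A \<and> x \<in> carrier H"
  by (simp add: semidirect_def)

lemma S_group: "group S"
proof (rule groupI)
  fix p q assume "p \<in> carrier S" "q \<in> carrier S"
  then show "p \<otimes>\<^bsub>S\<^esub> q \<in> carrier S" by (cases p, cases q) auto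
next
  show "\<one>\<^bsub>S\<^esub> \<in> carrier S" by (simp add: S_one)
next
  fix p q r assume "p \<in> carrier S" "q \<in> carrier S" "r \<in> carrier S"
  then show "p \<otimes>\<^bsub>S\<^esub> q \<otimes>\<^bsub>S\<^esub> r = p \<otimes>\<^bsub>S\<^esub> (q \<otimes>\<^bsub>S\<^esub> r)"
    by (cases p, cases q, cases r) (auto simp: A.m_assoc H.m_assoc phi_comp)
next
  fix p assume "p \<in> carrier S"
  then show "\<one>\<^bsub>S\<^esub> \<otimes>\<^bsub>S\<^esub> p = p" by (cases p) (auto simp: S_one)
next
  fix p assume "p \<in> carrier S"
  then obtain a x where p: "p = (a, x)" "a \<in> carrier A" "x \<in> carrier H" by (cases p) auto
  show "\<exists>q\<in>carrier S. q \<otimes>\<^bsub>S\<^esub> p = \<one>\<^bsub>S\<^esub>"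
  proof (intro bexI)
    show "(\<phi> (inv\<^bsub>H\<^esub> x) (inv\<^bsub>A\<^esub> a), inv\<^bsub>H\<^esub> x) \<otimes>\<^bsub>S\<^esub> p = \<one>\<^bsub>S\<^esub>"
      using p by (simp add: S_one flip: phi_mult)
  qed (use p in simp)
qed

sublocale S: group S by (rule S_group)

lemma S_inv: "a \<in> carrier A \<Longrightarrow> x \<in> carrier H \<Longrightarrow>
   inv\<^bsub>S\<^esub> (a, x) = (\<phi> (inv\<^bsub>H\<^esub> x) (inv\<^bsub>A\<^esub> a), inv\<^bsub>H\<^esub> x)"
  by (rule S.inv_equality) (simp_all add: S_one flip: phi_mult)

end

locale dec = group G for G (structure) +
  fixes N K
  assumes N: "N \<lhd> G" and K: "subgroup K G" and NK1: "\<And>x. x \<in> N \<Longrightarrow> x \<in> K \<Longrightarrow> x = \<one>"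
    and NKall: "\<And>g. g \<in> carrier G \<Longrightarrow> \<exists>a\<in>N. \<exists>k\<in>K. g = a \<otimes> k"
begin

lemma Nsub: "subgroup N G" by (rule normal_imp_subgroup[OF N])
lemma Nc[simp]: "a \<in> N \<Longrightarrow> a \<in> carrier G" by (rule subgroup.mem_carrier[OF Nsub])
lemma Kc[simp]: "a \<in> K \<Longrightarrow> a \<in> carrier G" by (rule subgroup.mem_carrier[OF K])
lemma Nm[simp]: "a \<in> N \<Longrightarrow> b \<in> N \<Longrightarrow> a \<otimes> b \<in> N" by (rule subgroup.m_closed[OF Nsub])
lemma Km[simp]: "a \<in> K \<Longrightarrow> b \<in> K \<Longrightarrow> a \<otimes> b \<in> K" by (rule subgroup.m_closed[OF K])
lemma Ni[simp]: "a \<in> N \<Longrightarrow> inv a \<in> N" by (rule subgroup.m_inv_closed[OF Nsub])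
lemma Ki[simp]: "a \<in> K \<Longrightarrow> inv a \<in> K" by (rule subgroup.m_inv_closed[OF K])
lemma N1[simp]: "\<one> \<in> N" by (rule subgroup.one_closed[OF Nsub])
lemma K1[simp]: "\<one> \<in> K" by (rule subgroup.one_closed[OF K])
lemma Nconj: "x \<in> carrier G \<Longrightarrow> a \<in> N \<Longrightarrow> x \<otimes> a \<otimes> inv x \<in> N"
  by (rule normal_invE(2)[OF N])

lemma dec_unique:
  assumes "a \<in> N" "b \<in> N" "k \<in> K" "l \<in> K" "a \<otimes> k = b \<otimes> l"
  shows "a = b \<and> k = l"
proof -
  have "inv b \<otimes> a = l \<otimes> inv k"
    using assms by (metis Kc Nc inv_closed inv_solve_left m_assoc m_closed r_inv r_one)
  moreover have "inv b \<otimes> a \<in> N" "l \<otimes> inv k \<in> K" using assms by auto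
  ultimately have "inv b \<otimes> a = \<one>" using NK1 by metis
  then have "a = b" using assms
    by (metis Nc inv_closed inv_inv inv_equality)
  then show ?thesis using assms by simp
qed

end

locale dec_aut = dec +
  fixes F
  assumes Fhom: "F \<in> hom G G" and FK: "\<And>k. k \<in> K \<Longrightarrow> F k = k"
    and Fb: "\<And>a. a \<in> N \<Longrightarrow> F a \<otimes> a \<in> K"
begin

lemma Fc[simp]: "g \<in> carrier G \<Longrightarrow> F g \<in> carrier G" by (rule hom_in_carrier[OF Fhom])
lemma Fm: "g \<in> carrier G \<Longrightarrow> h \<in> carrier G \<Longrightarrow> F (g \<otimes> h) = F g \<otimes> F h"
  using Fhom by (simp add: hom_def)
lemma Fone: "F \<one> = \<one>" by (rule FK[OF K1])
lemma Finv: "g \<in> carrier G \<Longrightarrow> F (inv g) = inv (F g)"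
  by (metis Fc Fm Fone inv_closed inv_equality l_inv)

lemma invol_N:
  assumes a: "a \<in> N" shows "F (F a) = a"
proof -
  define t where "t = F a \<otimes> a"
  have t: "t \<in> K" using Fb a t_def by simp
  have Fa: "F a = t \<otimes> inv a" using a t_def by (simp add: m_assoc)
  have t2: "F (a \<otimes> a) \<otimes> (a \<otimes> a) \<in> K" using Fb a by simp
  have "F (a \<otimes> a) \<otimes> (a \<otimes> a) = t \<otimes> (inv a \<otimes> t \<otimes> a)"
    using a t by (simp add: Fm Fa m_assoc)
  then have "inv a \<otimes> t \<otimes> a \<in> K"
    using t t2 a by (metis Ki Km Kc Nc inv_closed m_closed l_inv l_one m_assoc)
  then have c1: "inv a \<otimes> t \<otimes> a \<otimes> inv t \<in> K" using t by simp
  have "inv a \<otimes> (t \<otimes> a \<otimes> inv t) \<in> N" using a t Nconj by simp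
  moreover have "inv a \<otimes> t \<otimes> a \<otimes> inv t = inv a \<otimes> (t \<otimes> a \<otimes> inv t)"
    using a t by (simp add: m_assoc)
  ultimately have e1: "inv a \<otimes> t \<otimes> a \<otimes> inv t = \<one>" using c1 NK1 by simp
  have e2: "inv a \<otimes> (t \<otimes> a) = t"
    using e1 a t inv_solve_right'[of "\<one>" "inv a \<otimes> t \<otimes> a" t] by (simp add: m_assoc)
  have comm: "t \<otimes> a = a \<otimes> t"
    using e2 a t inv_solve_left'[of t a "t \<otimes> a"] by simp
  have "F (F a) = F t \<otimes> F (inv a)" using Fa a t by (simp add: Fm)
  also have "\<dots> = t \<otimes> inv (F a)" using a t by (simp add: FK Finv)
  also have "\<dots> = t \<otimes> a \<otimes> inv t" using a t by (simp add: Fa inv_mult_group m_assoc)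
  also have "\<dots> = a" using comm a t by (simp add: m_assoc)
  finally show ?thesis .
qed

lemma invol: assumes g: "g \<in> carrier G" shows "F (F g) = g"
proof -
  obtain a k where "a \<in> N" "k \<in> K" "g = a \<otimes> k" using NKall g by blast
  then show ?thesis by (simp add: Fm FK invol_N)
qed

lemma F_iso: "F \<in> iso G G"
proof (rule isoI[OF Fhom])
  show "bij_betw F (carrier G) (carrier G)"
    by (rule bij_betwI[where g=F]) (auto simp: invol)
qed

lemma F_inv_into: "g \<in> carrier G \<Longrightarrow> inv_into (carrier G) F g = F g"
  by (metis F_iso Fc invol iso_iff inv_into_f_eq)

lemma FN_normal: "F ` N \<lhd> G"
proof (rule normal_invI)
  show "subgroup (F ` N) G"
  proof (rule subgroupI)
    show "F ` N \<subseteq> carrier G" by auto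
    show "F ` N \<noteq> {}" using N1 by blast
    show "inv a \<in> F ` N" if "a \<in> F ` N" for a
      using that by (auto simp: Finv[symmetric])
    show "a \<otimes> b \<in> F ` N" if "a \<in> F ` N" "b \<in> F ` N" for a b
      using that by (auto simp: Fm[symmetric])
  qed
  show "x \<otimes> h \<otimes> inv x \<in> F ` N" if xc: "x \<in> carrier G" and hN: "h \<in> F ` N" for x h
  proof -
    obtain a where a: "a \<in> N" "h = F a" using hN by blast
    have "x \<otimes> h \<otimes> inv x = F (F x \<otimes> a \<otimes> inv (F x))"
      using a xc by (simp add: Fm Finv invol)
    then show ?thesis using Nconj a xc by simp
  qed
qed

end

locale ctrip = act A H \<phi> for A :: "('a, 'b) monoid_scheme" and H :: "('h, 'c) monoid_scheme" and \<phi> +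
  fixes \<zeta> F
  assumes ct: "cycle_triple A H \<phi> \<zeta> F"
begin

lemma fin: "finite (carrier S)" using ct by (simp add: cycle_triple_def)
lemma zc[simp]: "a \<in> carrier A \<Longrightarrow> \<zeta> a \<in> carrier H"
  using ct by (auto simp: cycle_triple_def one_cycle_def)
lemma zcyc: "a \<in> carrier A \<Longrightarrow> b \<in> carrier A \<Longrightarrow> \<zeta> a \<otimes>\<^bsub>H\<^esub> \<zeta> b = \<zeta> (a \<otimes>\<^bsub>A\<^esub> \<phi> (\<zeta> a) b)"
  using ct by (auto simp: cycle_triple_def one_cycle_def)
lemma z1[simp]: "\<zeta> \<one>\<^bsub>A\<^esub> = \<one>\<^bsub>H\<^esub>"
  using zcyc[of "\<one>\<^bsub>A\<^esub>" "\<one>\<^bsub>A\<^esub>"] by simp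
lemma Fiso: "F \<in> iso S S" using ct by (simp add: cycle_triple_def)
lemma FH: "x \<in> carrier H \<Longrightarrow> F (\<one>\<^bsub>A\<^esub>, x) = (\<one>\<^bsub>A\<^esub>, x)"
  using ct by (simp add: cycle_triple_def inH_def)
lemma FbA: "a \<in> carrier A \<Longrightarrow> F (a, \<one>\<^bsub>H\<^esub>) \<otimes>\<^bsub>S\<^esub> (a, \<one>\<^bsub>H\<^esub>) \<in> inH A H ` carrier H"
  using ct by (simp add: cycle_triple_def inA_def)

definition "NN = inA A H ` carrier A"
definition "KK = inH A H ` carrier H"

lemma NN_mem: "s \<in> NN \<longleftrightarrow> (\<exists>a. s = (a, \<one>\<^bsub>H\<^esub>) \<and> a \<in> carrier A)"
  by (auto simp: NN_def inA_def)
lemma KK_mem: "s \<in> KK \<longleftrightarrow> (\<exists>x. s = (\<one>\<^bsub>A\<^esub>, x) \<and> x \<in> carrier H)"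
  by (auto simp: KK_def inH_def)

lemma NN_normal: "NN \<lhd> S"
proof (rule S.normal_invI)
  have "(\<one>\<^bsub>A\<^esub>, \<one>\<^bsub>H\<^esub>) \<in> NN" by (simp add: NN_mem)
  then have ne: "NN \<noteq> {}" by auto
  show "subgroup NN S"
    apply (rule S.subgroupI)
    using ne by (auto simp: NN_mem S_carrier S_inv)
  fix x h assume "x \<in> carrier S" "h \<in> NN"
  then obtain b y a where "x = (b, y)" "b \<in> carrier A" "y \<in> carrier H" "h = (a, \<one>\<^bsub>H\<^esub>)" "a \<in> carrier A"
    by (auto simp: NN_mem S_carrier)
  then show "x \<otimes>\<^bsub>S\<^esub> h \<otimes>\<^bsub>S\<^esub> inv\<^bsub>S\<^esub> x \<in> NN"
    by (simp add: S_inv NN_mem)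
qed

lemma KK_sub: "subgroup KK S"
proof -
  have "(\<one>\<^bsub>A\<^esub>, \<one>\<^bsub>H\<^esub>) \<in> KK" by (simp add: KK_mem)
  then have ne: "KK \<noteq> {}" by auto
  show ?thesis
    apply (rule S.subgroupI)
    using ne by (auto simp: KK_mem S_carrier S_inv)
qed

lemma dec_S: "dec S NN KK"
proof (intro dec.intro dec_axioms.intro)
  show "group S" by (rule S_group)
  show "NN \<lhd> S" by (rule NN_normal)
  show "subgroup KK S" by (rule KK_sub)
  show "x = \<one>\<^bsub>S\<^esub>" if "x \<in> NN" "x \<in> KK" for x
    using that by (auto simp: NN_mem KK_mem S_one)
  show "\<exists>a\<in>NN. \<exists>k\<in>KK. g = a \<otimes>\<^bsub>S\<^esub> k" if gS: "g \<in> carrier S" for g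
  proof -
    obtain a x where g: "g = (a, x)" "a \<in> carrier A" "x \<in> carrier H" using gS by (cases g) (auto simp: S_carrier)
    show ?thesis
      by (rule bexI[of _ "(a, \<one>\<^bsub>H\<^esub>)"], rule bexI[of _ "(\<one>\<^bsub>A\<^esub>, x)"]) (use g in \<open>auto simp: NN_mem KK_mem\<close>)
  qed
qed

lemma decaut_S: "dec_aut S NN KK F"
proof -
  interpret dec S NN KK by (rule dec_S)
  show ?thesis
  proof (intro dec_aut.intro dec_aut_axioms.intro)
    show "dec S NN KK" by (rule dec_S)
    show "F \<in> hom S S" using Fiso by (simp add: iso_def)
    show "F k = k" if "k \<in> KK" for k using that by (auto simp: KK_mem FH)
    show "F a \<otimes>\<^bsub>S\<^esub> a \<in> KK" if "a \<in> NN" for a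
      using that FbA by (auto simp: NN_mem KK_def)
  qed
qed

sublocale D: dec_aut S NN KK F by (rule decaut_S)

lemma phi_cancel[simp]: "x \<in> carrier H \<Longrightarrow> a \<in> carrier A \<Longrightarrow> \<phi> x (\<phi> (inv\<^bsub>H\<^esub> x) a) = a"
  by (simp flip: phi_comp)

abbreviation "Gp \<equiv> Gplus_of A H \<phi> \<zeta>"

lemma Gp_prod: "a \<in> carrier A \<Longrightarrow> inA A H a \<otimes>\<^bsub>S\<^esub> inH A H (\<zeta> a) = (a, \<zeta> a)"
  by (simp add: inA_def inH_def)

lemma Gp_img: "Gp = (\<lambda>a. (a, \<zeta> a)) ` carrier A"
proof -
  have "Gp = (\<lambda>a. inA A H a \<otimes>\<^bsub>S\<^esub> inH A H (\<zeta> a)) ` carrier A" by (auto simp: Gplus_of_def)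
  also have "\<dots> = (\<lambda>a. (a, \<zeta> a)) ` carrier A" by (rule image_cong) (simp_all add: Gp_prod)
  finally show ?thesis .
qed

lemma Gp_mem: "s \<in> Gp \<longleftrightarrow> (\<exists>a. s = (a, \<zeta> a) \<and> a \<in> carrier A)"
  unfolding Gp_img by auto

lemma KK_Gm: "Gminus_of A H = KK" by (simp add: Gminus_of_def KK_def)

lemma zinv: assumes a: "a \<in> carrier A"
  shows "\<zeta> (inv\<^bsub>A\<^esub> (\<phi> (inv\<^bsub>H\<^esub> (\<zeta> a)) a)) = inv\<^bsub>H\<^esub> (\<zeta> a)"
proof -
  let ?b = "inv\<^bsub>A\<^esub> (\<phi> (inv\<^bsub>H\<^esub> (\<zeta> a)) a)"
  have b: "?b \<in> carrier A" using a by simp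
  have "\<zeta> a \<otimes>\<^bsub>H\<^esub> \<zeta> ?b = \<one>\<^bsub>H\<^esub>"
    using zcyc[OF a b] a by simp
  then have "\<zeta> ?b \<otimes>\<^bsub>H\<^esub> \<zeta> a = \<one>\<^bsub>H\<^esub>" by (rule H.inv_comm) (use a b in simp_all)
  then have "inv\<^bsub>H\<^esub> (\<zeta> a) = \<zeta> ?b" by (rule H.inv_equality) (use a b in simp_all)
  then show ?thesis by simp
qed

lemma Gp_sub: "subgroup Gp S"
proof (rule S.subgroupI)
  show "Gp \<subseteq> carrier S" by (auto simp: Gp_mem)
  have "(\<one>\<^bsub>A\<^esub>, \<zeta> \<one>\<^bsub>A\<^esub>) \<in> Gp" by (simp add: Gp_mem)
  then show "Gp \<noteq> {}" by auto
  show "inv\<^bsub>S\<^esub> u \<in> Gp" if u: "u \<in> Gp" for u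
  proof -
    obtain a where a: "u = (a, \<zeta> a)" "a \<in> carrier A" using u by (auto simp: Gp_mem)
    show ?thesis using a by (simp add: S_inv Gp_mem zinv)
  qed
  show "u \<otimes>\<^bsub>S\<^esub> v \<in> Gp" if u: "u \<in> Gp" and v: "v \<in> Gp" for u v
  proof -
    obtain a where a: "u = (a, \<zeta> a)" "a \<in> carrier A" using u by (auto simp: Gp_mem)
    obtain b where b: "v = (b, \<zeta> b)" "b \<in> carrier A" using v by (auto simp: Gp_mem)
    show ?thesis using a b by (simp add: Gp_mem zcyc)
  qed
qed

lemma ufact: "unique_factorization S Gp (Gminus_of A H)"
proof -
  have "\<exists>!p. p \<in> Gp \<times> KK \<and> g = fst p \<otimes>\<^bsub>S\<^esub> snd p" if gS: "g \<in> carrier S" for g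
  proof -
    obtain a x where g: "g = (a, x)" "a \<in> carrier A" "x \<in> carrier H" using gS by (cases g) (auto simp: S_carrier)
    show ?thesis
    proof (rule ex1I[of _ "((a, \<zeta> a), (\<one>\<^bsub>A\<^esub>, inv\<^bsub>H\<^esub> (\<zeta> a) \<otimes>\<^bsub>H\<^esub> x))"])
      show "((a, \<zeta> a), (\<one>\<^bsub>A\<^esub>, inv\<^bsub>H\<^esub> (\<zeta> a) \<otimes>\<^bsub>H\<^esub> x)) \<in> Gp \<times> KK \<and>
        g = fst ((a, \<zeta> a), (\<one>\<^bsub>A\<^esub>, inv\<^bsub>H\<^esub> (\<zeta> a) \<otimes>\<^bsub>H\<^esub> x)) \<otimes>\<^bsub>S\<^esub> snd ((a, \<zeta> a), (\<one>\<^bsub>A\<^esub>, inv\<^bsub>H\<^esub> (\<zeta> a) \<otimes>\<^bsub>H\<^esub> x))"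
        using g by (auto simp: Gp_mem KK_mem)
      fix p assume p: "p \<in> Gp \<times> KK \<and> g = fst p \<otimes>\<^bsub>S\<^esub> snd p"
      then obtain b y where pb: "p = ((b, \<zeta> b), (\<one>\<^bsub>A\<^esub>, y))" "b \<in> carrier A" "y \<in> carrier H"
        by (auto simp: Gp_mem KK_mem)
      have "(a, x) = (b, \<zeta> b \<otimes>\<^bsub>H\<^esub> y)" using p pb g by simp
      then have "b = a" "y = inv\<^bsub>H\<^esub> (\<zeta> a) \<otimes>\<^bsub>H\<^esub> x" using pb g by (auto simp: H.inv_solve_left)
      then show "p = ((a, \<zeta> a), (\<one>\<^bsub>A\<^esub>, inv\<^bsub>H\<^esub> (\<zeta> a) \<otimes>\<^bsub>H\<^esub> x))" using pb by simp
    qed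
  qed
  then show ?thesis using Gp_sub KK_sub S_group
    by (simp add: unique_factorization_def KK_Gm)
qed

lemma P_simp[simp]: "P_of A H (a, x) = (\<one>\<^bsub>A\<^esub>, x)" by (simp add: P_of_def inH_def)

lemma P_hom: "P_of A H \<in> hom S (S\<lparr>carrier := KK\<rparr>)"
proof (rule homI)
  fix s assume "s \<in> carrier S"
  then show "P_of A H s \<in> carrier (S\<lparr>carrier := KK\<rparr>)" by (cases s) (auto simp: KK_mem)
next
  fix s t assume "s \<in> carrier S" "t \<in> carrier S"
  then show "P_of A H (s \<otimes>\<^bsub>S\<^esub> t) = P_of A H s \<otimes>\<^bsub>S\<lparr>carrier := KK\<rparr>\<^esub> P_of A H t"
    by (cases s, cases t) auto
qed

lemma Gp_c: "u \<in> Gp \<Longrightarrow> u \<in> carrier S" by (auto simp: Gp_mem)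

lemma xi_hom: "xi_of A H \<in> hom (S\<lparr>carrier := Gp\<rparr>) (S\<lparr>carrier := Gminus_of A H\<rparr>)"
  using P_hom Gp_c unfolding xi_of_def KK_Gm by (auto simp: hom_def)

lemma eta_eq: "g \<in> carrier S \<Longrightarrow> eta_of A H \<phi> F g = P_of A H (F g)"
  by (simp add: eta_of_def D.F_inv_into)

lemma eta_hom: "eta_of A H \<phi> F \<in> hom (S\<lparr>carrier := Gp\<rparr>) (S\<lparr>carrier := Gminus_of A H\<rparr>)"
proof (rule homI)
  fix u assume "u \<in> carrier (S\<lparr>carrier := Gp\<rparr>)"
  then have u: "u \<in> carrier S" using Gp_c by simp
  then show "eta_of A H \<phi> F u \<in> carrier (S\<lparr>carrier := Gminus_of A H\<rparr>)"
    using hom_in_carrier[OF P_hom D.Fc[OF u]] by (simp add: eta_eq u KK_Gm)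
next
  fix u v assume "u \<in> carrier (S\<lparr>carrier := Gp\<rparr>)" "v \<in> carrier (S\<lparr>carrier := Gp\<rparr>)"
  then have u: "u \<in> carrier S" and v: "v \<in> carrier S" using Gp_c by auto
  have "P_of A H (F (u \<otimes>\<^bsub>S\<^esub> v)) = P_of A H (F u) \<otimes>\<^bsub>S\<^esub> P_of A H (F v)"
    using P_hom u v by (simp add: D.Fm hom_def)
  then show "eta_of A H \<phi> F (u \<otimes>\<^bsub>S\<lparr>carrier := Gp\<rparr>\<^esub> v) =
     eta_of A H \<phi> F u \<otimes>\<^bsub>S\<lparr>carrier := Gminus_of A H\<rparr>\<^esub> eta_of A H \<phi> F v"
    using u v by (simp add: eta_eq)
qed

lemma FA_form: assumes a: "a \<in> carrier A"
  obtains \<theta> where "\<theta> \<in> carrier H" "F (a, \<one>\<^bsub>H\<^esub>) = (\<phi> \<theta> (inv\<^bsub>A\<^esub> a), \<theta>)"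
proof -
  have "(a, \<one>\<^bsub>H\<^esub>) \<in> carrier S" using a by simp
  then have "F (a, \<one>\<^bsub>H\<^esub>) \<in> carrier S" by (rule D.Fc)
  then obtain c \<theta> where c: "F (a, \<one>\<^bsub>H\<^esub>) = (c, \<theta>)" "c \<in> carrier A" "\<theta> \<in> carrier H"
    by (auto simp: S_carrier)
  have "(c, \<theta>) \<otimes>\<^bsub>S\<^esub> (a, \<one>\<^bsub>H\<^esub>) \<in> inH A H ` carrier H" using FbA[OF a] c by simp
  then have "c \<otimes>\<^bsub>A\<^esub> \<phi> \<theta> a = \<one>\<^bsub>A\<^esub>" using c a by (auto simp: inH_def)
  then have "c = inv\<^bsub>A\<^esub> (\<phi> \<theta> a)" using c a by (simp add: A.inv_equality)
  then show ?thesis using that c a by simp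
qed

lemma key_xi: "a \<in> carrier A \<Longrightarrow> (a, \<zeta> a) \<otimes>\<^bsub>S\<^esub> xi_of A H (inv\<^bsub>S\<^esub> (a, \<zeta> a)) = (a, \<one>\<^bsub>H\<^esub>)"
  by (simp add: xi_of_def S_inv)

lemma key_eta: assumes a: "a \<in> carrier A"
  shows "eta_of A H \<phi> F (a, \<zeta> a) \<otimes>\<^bsub>S\<^esub> inv\<^bsub>S\<^esub> (a, \<zeta> a) = F (a, \<one>\<^bsub>H\<^esub>)"
proof -
  obtain \<theta> where th: "\<theta> \<in> carrier H" "F (a, \<one>\<^bsub>H\<^esub>) = (\<phi> \<theta> (inv\<^bsub>A\<^esub> a), \<theta>)"
    using FA_form[OF a] by blast
  have "F (a, \<zeta> a) = F ((a, \<one>\<^bsub>H\<^esub>) \<otimes>\<^bsub>S\<^esub> (\<one>\<^bsub>A\<^esub>, \<zeta> a))" using a by simp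
  also have "\<dots> = F (a, \<one>\<^bsub>H\<^esub>) \<otimes>\<^bsub>S\<^esub> F (\<one>\<^bsub>A\<^esub>, \<zeta> a)" by (rule D.Fm) (use a in simp_all)
  also have "\<dots> = F (a, \<one>\<^bsub>H\<^esub>) \<otimes>\<^bsub>S\<^esub> (\<one>\<^bsub>A\<^esub>, \<zeta> a)" using a by (simp add: FH)
  finally have "F (a, \<zeta> a) = (\<phi> \<theta> (inv\<^bsub>A\<^esub> a), \<theta> \<otimes>\<^bsub>H\<^esub> \<zeta> a)" using th a by simp
  then have "eta_of A H \<phi> F (a, \<zeta> a) = (\<one>\<^bsub>A\<^esub>, \<theta> \<otimes>\<^bsub>H\<^esub> \<zeta> a)"
    using a by (simp add: eta_eq)
  then show ?thesis using a th by (simp add: S_inv phi_comp H.m_assoc)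
qed

lemma NN_img: "NN = (\<lambda>a. (a, \<one>\<^bsub>H\<^esub>)) ` carrier A"
  by (simp add: NN_def inA_def)

lemma plus1_eq: "plus1 S Gp (xi_of A H) = NN"
proof -
  have "plus1 S Gp (xi_of A H) = (\<lambda>u. u \<otimes>\<^bsub>S\<^esub> xi_of A H (inv\<^bsub>S\<^esub> u)) ` Gp"
    by (auto simp: plus1_def)
  also have "\<dots> = (\<lambda>a. (a, \<zeta> a) \<otimes>\<^bsub>S\<^esub> xi_of A H (inv\<^bsub>S\<^esub> (a, \<zeta> a))) ` carrier A"
    by (simp add: Gp_img image_image)
  also have "\<dots> = NN" unfolding NN_img by (rule image_cong) (simp_all add: key_xi)
  finally show ?thesis .
qed

lemma plus2_eq: "plus2 S Gp (eta_of A H \<phi> F) = F ` NN"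
proof -
  have "plus2 S Gp (eta_of A H \<phi> F) = (\<lambda>u. eta_of A H \<phi> F (inv\<^bsub>S\<^esub> u) \<otimes>\<^bsub>S\<^esub> u) ` Gp"
    by (auto simp: plus2_def)
  also have "\<dots> = (\<lambda>u. eta_of A H \<phi> F u \<otimes>\<^bsub>S\<^esub> inv\<^bsub>S\<^esub> u) ` Gp"
  proof -
    have i: "inv\<^bsub>S\<^esub> u \<in> Gp" if "u \<in> Gp" for u using that Gp_sub by (rule subgroup.m_inv_closed[rotated])
    have ii: "inv\<^bsub>S\<^esub> (inv\<^bsub>S\<^esub> u) = u" if "u \<in> Gp" for u using that Gp_c by simp
    show ?thesis
      unfolding set_eq_iff image_iff by (metis i ii)
  qed
  also have "\<dots> = (\<lambda>a. eta_of A H \<phi> F (a, \<zeta> a) \<otimes>\<^bsub>S\<^esub> inv\<^bsub>S\<^esub> (a, \<zeta> a)) ` carrier A"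
    by (simp add: Gp_img image_image)
  also have "\<dots> = (\<lambda>a. F (a, \<one>\<^bsub>H\<^esub>)) ` carrier A" by (rule image_cong) (simp_all add: key_eta)
  also have "\<dots> = F ` NN" by (simp add: NN_img image_image)
  finally show ?thesis .
qed

lemma f_iso: "F \<in> iso (S\<lparr>carrier := NN\<rparr>) (S\<lparr>carrier := F ` NN\<rparr>)"
proof (rule isoI)
  show "F \<in> hom (S\<lparr>carrier := NN\<rparr>) (S\<lparr>carrier := F ` NN\<rparr>)"
    by (rule homI) (auto simp: D.Fm)
  have "inj_on F (carrier S)" using Fiso by (simp add: iso_def bij_betw_def)
  then have "inj_on F NN" by (rule inj_on_subset) (auto simp: NN_mem)
  then show "bij_betw F (carrier (S\<lparr>carrier := NN\<rparr>)) (carrier (S\<lparr>carrier := F ` NN\<rparr>))"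
    by (simp add: bij_betw_def)
qed

lemma part2_main: "factorization_triple S Gp (Gminus_of A H) (xi_of A H) (eta_of A H \<phi> F)"
  unfolding factorization_triple_def
proof (intro conjI)
  show "group S" by (rule S_group)
  show "finite (carrier S)" by (rule fin)
  show "subgroup (Gminus_of A H) S" using KK_sub KK_Gm by simp
  show "unique_factorization S Gp (Gminus_of A H)" by (rule ufact)
  show "xi_of A H \<in> hom (S\<lparr>carrier := Gp\<rparr>) (S\<lparr>carrier := Gminus_of A H\<rparr>)" by (rule xi_hom)
  show "eta_of A H \<phi> F \<in> hom (S\<lparr>carrier := Gp\<rparr>) (S\<lparr>carrier := Gminus_of A H\<rparr>)" by (rule eta_hom)
  show "plus1 S Gp (xi_of A H) \<lhd> S" using NN_normal plus1_eq by simp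
  show "plus2 S Gp (eta_of A H \<phi> F) \<lhd> S" using D.FN_normal plus2_eq by simp
  show "\<exists>f. f \<in> iso (S\<lparr>carrier := plus1 S Gp (xi_of A H)\<rparr>) (S\<lparr>carrier := plus2 S Gp (eta_of A H \<phi> F)\<rparr>) \<and>
      (\<forall>u\<in>Gp. f (u \<otimes>\<^bsub>S\<^esub> xi_of A H (inv\<^bsub>S\<^esub> u)) = eta_of A H \<phi> F u \<otimes>\<^bsub>S\<^esub> inv\<^bsub>S\<^esub> u)"
    by (intro exI[of _ F] conjI) (auto simp: plus1_eq plus2_eq f_iso Gp_mem key_xi key_eta)
qed

lemma part4_conj: "x \<in> carrier H \<Longrightarrow> a \<in> carrier A \<Longrightarrow> conjg S (inH A H x) (inA A H a) = inA A H (\<phi> x a)"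
  by (simp add: conjg_def inH_def inA_def S_inv)

lemma part4_zeta: assumes z: "zeta_eq S Gp (xi_of A H) \<zeta>'" and a: "a \<in> carrier A"
  shows "\<zeta>' (inA A H a) = inH A H (\<zeta> a)"
proof -
  have u: "(a, \<zeta> a) \<in> Gp" using a by (simp add: Gp_mem)
  have "\<zeta>' ((a, \<zeta> a) \<otimes>\<^bsub>S\<^esub> xi_of A H (inv\<^bsub>S\<^esub> (a, \<zeta> a))) = xi_of A H (a, \<zeta> a)"
    using z u unfolding zeta_eq_def by blast
  then have "\<zeta>' (a, \<one>\<^bsub>H\<^esub>) = xi_of A H (a, \<zeta> a)" by (simp only: key_xi[OF a])
  then show ?thesis by (simp add: xi_of_def inA_def inH_def)
qed

lemma part4_F: assumes F': "F_eq S Gp (Gminus_of A H) (xi_of A H) (eta_of A H \<phi> F) F'"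
  and s: "s \<in> carrier S" shows "F' s = F s"
proof -
  obtain a y where sa: "s = (a, y)" "a \<in> carrier A" "y \<in> carrier H" using s by (cases s) (auto simp: S_carrier)
  have u: "(a, \<zeta> a) \<in> Gp" using sa by (simp add: Gp_mem)
  have x: "(\<one>\<^bsub>A\<^esub>, y) \<in> Gminus_of A H" using sa by (simp add: KK_Gm KK_mem)
  have "F' ((a, \<zeta> a) \<otimes>\<^bsub>S\<^esub> xi_of A H (inv\<^bsub>S\<^esub> (a, \<zeta> a)) \<otimes>\<^bsub>S\<^esub> (\<one>\<^bsub>A\<^esub>, y)) =
      eta_of A H \<phi> F (a, \<zeta> a) \<otimes>\<^bsub>S\<^esub> inv\<^bsub>S\<^esub> (a, \<zeta> a) \<otimes>\<^bsub>S\<^esub> (\<one>\<^bsub>A\<^esub>, y)"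
    using F' u x unfolding F_eq_def by blast
  then have "F' (a, y) = F (a, \<one>\<^bsub>H\<^esub>) \<otimes>\<^bsub>S\<^esub> (\<one>\<^bsub>A\<^esub>, y)"
    using sa by (simp add: key_xi key_eta)
  also have "\<dots> = F (a, \<one>\<^bsub>H\<^esub>) \<otimes>\<^bsub>S\<^esub> F (\<one>\<^bsub>A\<^esub>, y)" using sa by (simp add: FH)
  also have "\<dots> = F ((a, \<one>\<^bsub>H\<^esub>) \<otimes>\<^bsub>S\<^esub> (\<one>\<^bsub>A\<^esub>, y))" by (rule D.Fm[symmetric]) (use sa in simp_all)
  also have "\<dots> = F (a, y)" using sa by simp
  finally show ?thesis using sa by simp
qed

end

lemma ctrip_of: "cycle_triple A H \<phi> \<zeta> F \<Longrightarrow> ctrip A H \<phi> \<zeta> F"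
  unfolding ctrip_def ctrip_axioms_def act_def by (simp add: cycle_triple_def)

lemma part2: "cycle_triple A H \<phi> \<zeta> F \<Longrightarrow>
      factorization_triple (semidirect A H \<phi>) (Gplus_of A H \<phi> \<zeta>) (Gminus_of A H)
        (xi_of A H) (eta_of A H \<phi> F)"
  using ctrip.part2_main[OF ctrip_of] .

lemma part4: "cycle_triple A H \<phi> \<zeta> F \<Longrightarrow>
      (let S = semidirect A H \<phi>; Gp = Gplus_of A H \<phi> \<zeta>; Gm = Gminus_of A H;
           \<xi> = xi_of A H; \<eta> = eta_of A H \<phi> F in
        plus1 S Gp \<xi> = inA A H ` carrier A \<and>
        (\<forall>x\<in>carrier H. \<forall>a\<in>carrier A. conjg S (inH A H x) (inA A H a) = inA A H (\<phi> x a)) \<and>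
        (\<forall>\<zeta>'. zeta_eq S Gp \<xi> \<zeta>' \<longrightarrow> (\<forall>a\<in>carrier A. \<zeta>' (inA A H a) = inH A H (\<zeta> a))) \<and>
        (\<forall>F'. F_eq S Gp Gm \<xi> \<eta> F' \<longrightarrow> (\<forall>s\<in>carrier S. F' s = F s)))"
proof -
  assume "cycle_triple A H \<phi> \<zeta> F"
  then interpret ctrip A H \<phi> \<zeta> F by (rule ctrip_of)
  show ?thesis unfolding Let_def
    using plus1_eq part4_conj part4_zeta part4_F by (simp add: NN_def)
qed


lemma ex1_uniq: "\<exists>!x. P x \<Longrightarrow> P a \<Longrightarrow> P b \<Longrightarrow> a = b" by blast

locale ftrip =
  fixes G :: "('g, 'm) monoid_scheme" (structure) and Gp Gm \<xi> \<eta>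
  assumes ft: "factorization_triple G Gp Gm \<xi> \<eta>"
begin

lemma grp: "group G" using ft by (simp add: factorization_triple_def)
sublocale group G by (rule grp)

lemma finG: "finite (carrier G)" using ft by (simp add: factorization_triple_def)
lemma Gm_sub: "subgroup Gm G" using ft by (simp add: factorization_triple_def)
lemma Gp_sub: "subgroup Gp G" using ft by (simp add: factorization_triple_def unique_factorization_def)
lemma uf: "g \<in> carrier G \<Longrightarrow> \<exists>!p. p \<in> Gp \<times> Gm \<and> g = fst p \<otimes> snd p"
  using ft by (simp add: factorization_triple_def unique_factorization_def)
lemma xih: "\<xi> \<in> hom (G\<lparr>carrier := Gp\<rparr>) (G\<lparr>carrier := Gm\<rparr>)" using ft by (simp add: factorization_triple_def)
lemma etah: "\<eta> \<in> hom (G\<lparr>carrier := Gp\<rparr>) (G\<lparr>carrier := Gm\<rparr>)" using ft by (simp add: factorization_triple_def)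

abbreviation "AA \<equiv> plus1 G Gp \<xi>"
abbreviation "A2 \<equiv> plus2 G Gp \<eta>"

lemma AA_normal: "AA \<lhd> G" using ft by (simp add: factorization_triple_def)
lemma A2_normal: "A2 \<lhd> G" using ft by (simp add: factorization_triple_def)
lemma f_ex: "\<exists>f. f \<in> iso (G\<lparr>carrier := AA\<rparr>) (G\<lparr>carrier := A2\<rparr>) \<and>
          (\<forall>u\<in>Gp. f (u \<otimes> \<xi> (inv u)) = \<eta> u \<otimes> inv u)"
  using ft by (simp add: factorization_triple_def)

lemma Gpc[simp]: "u \<in> Gp \<Longrightarrow> u \<in> carrier G" by (rule subgroup.mem_carrier[OF Gp_sub])
lemma Gmc[simp]: "u \<in> Gm \<Longrightarrow> u \<in> carrier G" by (rule subgroup.mem_carrier[OF Gm_sub])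
lemma Gpm[simp]: "u \<in> Gp \<Longrightarrow> v \<in> Gp \<Longrightarrow> u \<otimes> v \<in> Gp" by (rule subgroup.m_closed[OF Gp_sub])
lemma Gmm[simp]: "u \<in> Gm \<Longrightarrow> v \<in> Gm \<Longrightarrow> u \<otimes> v \<in> Gm" by (rule subgroup.m_closed[OF Gm_sub])
lemma Gpi[simp]: "u \<in> Gp \<Longrightarrow> inv u \<in> Gp" by (rule subgroup.m_inv_closed[OF Gp_sub])
lemma Gmi[simp]: "u \<in> Gm \<Longrightarrow> inv u \<in> Gm" by (rule subgroup.m_inv_closed[OF Gm_sub])
lemma Gp1[simp]: "\<one> \<in> Gp" by (rule subgroup.one_closed[OF Gp_sub])
lemma Gm1[simp]: "\<one> \<in> Gm" by (rule subgroup.one_closed[OF Gm_sub])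

lemma xi_in[simp]: "u \<in> Gp \<Longrightarrow> \<xi> u \<in> Gm"
  using hom_in_carrier[OF xih, of u] by simp
lemma eta_in[simp]: "u \<in> Gp \<Longrightarrow> \<eta> u \<in> Gm"
  using hom_in_carrier[OF etah, of u] by simp
lemma xi_m: "u \<in> Gp \<Longrightarrow> v \<in> Gp \<Longrightarrow> \<xi> (u \<otimes> v) = \<xi> u \<otimes> \<xi> v"
  using xih by (simp add: hom_def)
lemma eta_m: "u \<in> Gp \<Longrightarrow> v \<in> Gp \<Longrightarrow> \<eta> (u \<otimes> v) = \<eta> u \<otimes> \<eta> v"
  using etah by (simp add: hom_def)
lemma xi1[simp]: "\<xi> \<one> = \<one>"
  using xi_m[of \<one> \<one>] by (simp del: xi_in add: xi_in[of \<one>, simplified] r_cancel_one')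
lemma eta1[simp]: "\<eta> \<one> = \<one>"
  using eta_m[of \<one> \<one>] by (simp del: eta_in add: eta_in[of \<one>, simplified] r_cancel_one')
lemma xi_inv[simp]: assumes u: "u \<in> Gp" shows "\<xi> (inv u) = inv (\<xi> u)"
proof -
  have "\<xi> (inv u) \<otimes> \<xi> u = \<one>" using u by (simp flip: xi_m)
  then have "inv (\<xi> u) = \<xi> (inv u)" by (rule inv_equality) (use u in simp_all)
  then show ?thesis by simp
qed
lemma eta_inv[simp]: assumes u: "u \<in> Gp" shows "\<eta> (inv u) = inv (\<eta> u)"
proof -
  have "\<eta> (inv u) \<otimes> \<eta> u = \<one>" using u by (simp flip: eta_m)
  then have "inv (\<eta> u) = \<eta> (inv u)" by (rule inv_equality) (use u in simp_all)
  then show ?thesis by simp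
qed

lemma pm_unique: assumes "u \<in> Gp" "v \<in> Gp" "x \<in> Gm" "y \<in> Gm" "u \<otimes> x = v \<otimes> y"
  shows "u = v \<and> x = y"
proof -
  have g: "u \<otimes> x \<in> carrier G" using assms by simp
  have "(u, x) = (v, y)" by (rule ex1_uniq[OF uf[OF g]]) (use assms in simp_all)
  then show ?thesis by simp
qed

lemma pm_ex: assumes "g \<in> carrier G" obtains u x where "u \<in> Gp" "x \<in> Gm" "g = u \<otimes> x"
proof -
  obtain p where p: "p \<in> Gp \<times> Gm \<and> g = fst p \<otimes> snd p" using ex1_implies_ex[OF uf[OF assms]] ..
  show ?thesis by (rule that[of "fst p" "snd p"]) (use p in \<open>simp_all add: mem_Times_iff\<close>)
qed

lemma AA_mem: "a \<in> AA \<longleftrightarrow> (\<exists>u\<in>Gp. a = u \<otimes> inv (\<xi> u))"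
proof
  assume "a \<in> AA"
  then obtain u where "u \<in> Gp" "a = u \<otimes> \<xi> (inv u)" unfolding plus1_def by auto
  then show "\<exists>u\<in>Gp. a = u \<otimes> inv (\<xi> u)" by (intro bexI[of _ u]) auto
next
  assume "\<exists>u\<in>Gp. a = u \<otimes> inv (\<xi> u)"
  then obtain u where "u \<in> Gp" "a = u \<otimes> inv (\<xi> u)" by auto
  then show "a \<in> AA" unfolding plus1_def by (intro CollectI exI[of _ u]) auto
qed

lemma A2_mem: "c \<in> A2 \<longleftrightarrow> (\<exists>w\<in>Gp. c = \<eta> w \<otimes> inv w)"
proof
  assume "c \<in> A2"
  then obtain u where "u \<in> Gp" "c = \<eta> (inv u) \<otimes> u" unfolding plus2_def by auto
  then show "\<exists>w\<in>Gp. c = \<eta> w \<otimes> inv w" by (intro bexI[of _ "inv u"]) auto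
next
  assume "\<exists>w\<in>Gp. c = \<eta> w \<otimes> inv w"
  then obtain w where "w \<in> Gp" "c = \<eta> w \<otimes> inv w" by auto
  then show "c \<in> A2" unfolding plus2_def by (intro CollectI exI[of _ "inv w"]) auto
qed

lemma GpGm_int0: "u \<in> Gp \<Longrightarrow> u \<in> Gm \<Longrightarrow> u = \<one> \<and> \<one> = u" by (rule pm_unique) simp_all
lemma GpGm_int: "u \<in> Gp \<Longrightarrow> u \<in> Gm \<Longrightarrow> u = \<one>" using GpGm_int0 by blast

lemma AA_int: assumes "a \<in> AA" "a \<in> Gm" shows "a = \<one>"
proof -
  obtain u where u: "u \<in> Gp" "a = u \<otimes> inv (\<xi> u)" using assms AA_mem by auto
  have e: "u = a \<otimes> \<xi> u" using u by (simp add: m_assoc)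
  have "a \<otimes> \<xi> u \<in> Gm" using assms u by simp
  then have "u \<in> Gm" using e[symmetric] by simp
  then have "u = \<one>" using u(1) GpGm_int by blast
  then show ?thesis using u by simp
qed

lemma AA_inj: assumes "u \<in> Gp" "v \<in> Gp" "u \<otimes> inv (\<xi> u) = v \<otimes> inv (\<xi> v)" shows "u = v"
  using pm_unique[OF assms(1,2) _ _ assms(3)] assms(1,2) by simp

lemma decG: "dec G AA Gm"
proof (intro dec.intro dec_axioms.intro)
  show "group G" by (rule grp)
  show "AA \<lhd> G" by (rule AA_normal)
  show "subgroup Gm G" by (rule Gm_sub)
  show "x = \<one>" if "x \<in> AA" "x \<in> Gm" for x using AA_int that by blast
  show "\<exists>a\<in>AA. \<exists>k\<in>Gm. g = a \<otimes> k" if gc: "g \<in> carrier G" for g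
  proof -
    obtain u x where ux: "u \<in> Gp" "x \<in> Gm" "g = u \<otimes> x" using pm_ex[OF gc] by blast
    have "g = (u \<otimes> inv (\<xi> u)) \<otimes> (\<xi> u \<otimes> x)" using ux by (simp add: m_assoc)
    moreover have "u \<otimes> inv (\<xi> u) \<in> AA" using ux AA_mem by blast
    moreover have "\<xi> u \<otimes> x \<in> Gm" using ux by simp
    ultimately show ?thesis by blast
  qed
qed

sublocale DG: dec G AA Gm by (rule decG)

end


context ftrip begin

lemma AAc[simp]: "a \<in> AA \<Longrightarrow> a \<in> carrier G" by (rule DG.Nc)

lemma A2_normal_conj: "x \<in> carrier G \<Longrightarrow> c \<in> A2 \<Longrightarrow> x \<otimes> c \<otimes> inv x \<in> A2"
  by (rule normal_invE(2)[OF A2_normal])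

lemma zeta_props: assumes z: "zeta_eq G Gp \<xi> \<zeta>" and u: "u \<in> Gp"
  shows "\<zeta> (u \<otimes> inv (\<xi> u)) = \<xi> u"
  using z u unfolding zeta_eq_def by simp

lemma zeta_exists: "\<exists>\<zeta>. zeta_eq G Gp \<xi> \<zeta>"
proof -
  define \<zeta> where "\<zeta> a = \<xi> (SOME u. u \<in> Gp \<and> a = u \<otimes> \<xi> (inv u))" for a
  have "\<zeta> (u \<otimes> \<xi> (inv u)) = \<xi> u" if u: "u \<in> Gp" for u
  proof -
    have "(SOME v. v \<in> Gp \<and> u \<otimes> \<xi> (inv u) = v \<otimes> \<xi> (inv v)) = u"
    proof (rule someI2[of _ u])
      show "u \<in> Gp \<and> u \<otimes> \<xi> (inv u) = u \<otimes> \<xi> (inv u)" using u by simp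
      fix v assume v: "v \<in> Gp \<and> u \<otimes> \<xi> (inv u) = v \<otimes> \<xi> (inv v)"
      then show "v = u" using AA_inj[of v u] u by simp
    qed
    then show ?thesis by (simp add: \<zeta>_def)
  qed
  then show ?thesis unfolding zeta_eq_def by blast
qed

lemma one_cyc: assumes z: "zeta_eq G Gp \<xi> \<zeta>"
  shows "one_cycle (G\<lparr>carrier := AA\<rparr>) (G\<lparr>carrier := Gm\<rparr>) (conjg G) \<zeta>"
  unfolding one_cycle_def
proof (intro conjI ballI)
  show "\<zeta> \<in> carrier (G\<lparr>carrier := AA\<rparr>) \<rightarrow> carrier (G\<lparr>carrier := Gm\<rparr>)"
  proof
    fix a assume "a \<in> carrier (G\<lparr>carrier := AA\<rparr>)"
    then obtain u where u: "u \<in> Gp" "a = u \<otimes> inv (\<xi> u)" using AA_mem by auto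
    show "\<zeta> a \<in> carrier (G\<lparr>carrier := Gm\<rparr>)" using zeta_props[OF z u(1)] u by simp
  qed
  fix a b assume "a \<in> carrier (G\<lparr>carrier := AA\<rparr>)" "b \<in> carrier (G\<lparr>carrier := AA\<rparr>)"
  then obtain u v where u: "u \<in> Gp" "a = u \<otimes> inv (\<xi> u)" and v: "v \<in> Gp" "b = v \<otimes> inv (\<xi> v)"
    using AA_mem by auto
  have za: "\<zeta> a = \<xi> u" using zeta_props[OF z u(1)] u by simp
  have zb: "\<zeta> b = \<xi> v" using zeta_props[OF z v(1)] v by simp
  have "a \<otimes> conjg G (\<zeta> a) b = a \<otimes> (\<xi> u \<otimes> b \<otimes> inv (\<xi> u))" by (simp add: za conjg_def)
  also have "\<dots> = (u \<otimes> v) \<otimes> inv (\<xi> (u \<otimes> v))"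
    using u v by (simp add: xi_m m_assoc inv_mult_group)
  finally have "a \<otimes> conjg G (\<zeta> a) b = (u \<otimes> v) \<otimes> inv (\<xi> (u \<otimes> v))" .
  then have "\<zeta> (a \<otimes> conjg G (\<zeta> a) b) = \<xi> (u \<otimes> v)"
    using zeta_props[OF z, of "u \<otimes> v"] u v by simp
  then show "\<zeta> a \<otimes>\<^bsub>G\<lparr>carrier := Gm\<rparr>\<^esub> \<zeta> b =
     \<zeta> (a \<otimes>\<^bsub>G\<lparr>carrier := AA\<rparr>\<^esub> conjg G (\<zeta> a) b)"
    using u(1) v(1) by (simp add: za zb xi_m)
qed

lemma conj_AA: "x \<in> carrier G \<Longrightarrow> a \<in> AA \<Longrightarrow> conjg G x a \<in> AA"
  unfolding conjg_def by (rule DG.Nconj)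

lemma act_G: "action_by_aut (G\<lparr>carrier := Gm\<rparr>) (G\<lparr>carrier := AA\<rparr>) (conjg G)"
  unfolding action_by_aut_def
proof (intro conjI ballI)
  show "group (G\<lparr>carrier := Gm\<rparr>)" by (rule subgroup.subgroup_is_group[OF Gm_sub grp])
  show "group (G\<lparr>carrier := AA\<rparr>)" by (rule subgroup.subgroup_is_group[OF DG.Nsub grp])
  fix x assume x: "x \<in> carrier (G\<lparr>carrier := Gm\<rparr>)"
  then have xc: "x \<in> carrier G" by simp
  show "conjg G x \<in> iso (G\<lparr>carrier := AA\<rparr>) (G\<lparr>carrier := AA\<rparr>)"
  proof (rule isoI)
    show "conjg G x \<in> hom (G\<lparr>carrier := AA\<rparr>) (G\<lparr>carrier := AA\<rparr>)"
    proof (rule homI)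
      fix a assume "a \<in> carrier (G\<lparr>carrier := AA\<rparr>)"
      then show "conjg G x a \<in> carrier (G\<lparr>carrier := AA\<rparr>)" using conj_AA xc by simp
    next
      fix a b assume "a \<in> carrier (G\<lparr>carrier := AA\<rparr>)" "b \<in> carrier (G\<lparr>carrier := AA\<rparr>)"
      then show "conjg G x (a \<otimes>\<^bsub>G\<lparr>carrier := AA\<rparr>\<^esub> b) =
          conjg G x a \<otimes>\<^bsub>G\<lparr>carrier := AA\<rparr>\<^esub> conjg G x b"
        using xc by (simp add: conjg_def m_assoc)
    qed
    show "bij_betw (conjg G x) (carrier (G\<lparr>carrier := AA\<rparr>)) (carrier (G\<lparr>carrier := AA\<rparr>))"
    proof (rule bij_betwI[where g="conjg G (inv x)"])
      show "conjg G x \<in> carrier (G\<lparr>carrier := AA\<rparr>) \<rightarrow> carrier (G\<lparr>carrier := AA\<rparr>)"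
        using conj_AA xc by simp
      show "conjg G (inv x) \<in> carrier (G\<lparr>carrier := AA\<rparr>) \<rightarrow> carrier (G\<lparr>carrier := AA\<rparr>)"
        using conj_AA xc by simp
      show "conjg G (inv x) (conjg G x a) = a" if "a \<in> carrier (G\<lparr>carrier := AA\<rparr>)" for a
        using that xc by (simp add: conjg_def m_assoc)
      show "conjg G x (conjg G (inv x) a) = a" if "a \<in> carrier (G\<lparr>carrier := AA\<rparr>)" for a
        using that xc by (simp add: conjg_def m_assoc)
    qed
  qed
next
  fix a assume "a \<in> carrier (G\<lparr>carrier := AA\<rparr>)"
  then show "conjg G \<one>\<^bsub>G\<lparr>carrier := Gm\<rparr>\<^esub> a = a" by (simp add: conjg_def)
next
  fix x y a assume "x \<in> carrier (G\<lparr>carrier := Gm\<rparr>)" "y \<in> carrier (G\<lparr>carrier := Gm\<rparr>)"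
    "a \<in> carrier (G\<lparr>carrier := AA\<rparr>)"
  then show "conjg G (x \<otimes>\<^bsub>G\<lparr>carrier := Gm\<rparr>\<^esub> y) a = conjg G x (conjg G y a)"
    by (simp add: conjg_def m_assoc inv_mult_group)
qed

end


context ftrip begin

lemma mp_unique: assumes "m \<in> Gm" "n \<in> Gm" "p \<in> Gp" "q \<in> Gp" "m \<otimes> p = n \<otimes> q"
  shows "m = n \<and> p = q"
proof -
  have "inv (m \<otimes> p) = inv (n \<otimes> q)" using assms(5) by simp
  then have "inv p \<otimes> inv m = inv q \<otimes> inv n" using assms(1-4) by (simp add: inv_mult_group)
  then have "inv p = inv q \<and> inv m = inv n" by (intro pm_unique) (use assms(1-4) in simp_all)
  then show ?thesis using assms(1-4) by (metis Gmc Gpc inv_inv)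
qed

lemma F_exists: "\<exists>F. F_eq G Gp Gm \<xi> \<eta> F"
proof -
  define F where "F g = (SOME h. \<exists>u\<in>Gp. \<exists>x\<in>Gm. g = u \<otimes> \<xi> (inv u) \<otimes> x \<and> h = \<eta> u \<otimes> inv u \<otimes> x)" for g
  have "F (u \<otimes> \<xi> (inv u) \<otimes> x) = \<eta> u \<otimes> inv u \<otimes> x" if u: "u \<in> Gp" and x: "x \<in> Gm" for u x
    unfolding F_def
  proof (rule someI2[of _ "\<eta> u \<otimes> inv u \<otimes> x"])
    show "\<exists>u'\<in>Gp. \<exists>x'\<in>Gm. u \<otimes> \<xi> (inv u) \<otimes> x = u' \<otimes> \<xi> (inv u') \<otimes> x' \<and> \<eta> u \<otimes> inv u \<otimes> x = \<eta> u' \<otimes> inv u' \<otimes> x'"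
      using u x by blast
    fix h assume "\<exists>u'\<in>Gp. \<exists>x'\<in>Gm. u \<otimes> \<xi> (inv u) \<otimes> x = u' \<otimes> \<xi> (inv u') \<otimes> x' \<and> h = \<eta> u' \<otimes> inv u' \<otimes> x'"
    then obtain u' x' where u': "u' \<in> Gp" "x' \<in> Gm" and e: "u \<otimes> \<xi> (inv u) \<otimes> x = u' \<otimes> \<xi> (inv u') \<otimes> x'"
      and h: "h = \<eta> u' \<otimes> inv u' \<otimes> x'" by blast
    have a1: "u \<otimes> inv (\<xi> u) \<in> AA" using u AA_mem by blast
    have a2: "u' \<otimes> inv (\<xi> u') \<in> AA" using u' AA_mem by blast
    have "u \<otimes> inv (\<xi> u) = u' \<otimes> inv (\<xi> u') \<and> x = x'"
      by (rule DG.dec_unique[OF a1 a2 x u'(2)]) (use e u u' in simp)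
    then have "u = u'" "x = x'" using AA_inj u u'(1) by auto
    then show "h = \<eta> u \<otimes> inv u \<otimes> x" using h by simp
  qed
  then show ?thesis unfolding F_eq_def by blast
qed

abbreviation "AG \<equiv> G\<lparr>carrier := AA\<rparr>"
abbreviation "HG \<equiv> G\<lparr>carrier := Gm\<rparr>"
abbreviation "SG \<equiv> semidirect AG HG (conjg G)"
abbreviation "\<iota> \<equiv> (\<lambda>s. fst s \<otimes> snd s)"

lemma actI: "act AG HG (conjg G)" unfolding act_def by (rule act_G)

sublocale I: act AG HG "conjg G" by (rule actI)

lemma SG_carrier: "carrier SG = AA \<times> Gm" by (simp add: semidirect_def)

lemma iota_iso: "\<iota> \<in> iso SG G"
proof (rule isoI)
  show "\<iota> \<in> hom SG G"
  proof (rule homI)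
    fix s assume "s \<in> carrier SG" then show "\<iota> s \<in> carrier G" by (auto simp: SG_carrier)
  next
    fix s t assume "s \<in> carrier SG" "t \<in> carrier SG"
    then obtain a x b y where s: "s = (a, x)" "a \<in> AA" "x \<in> Gm" and t: "t = (b, y)" "b \<in> AA" "y \<in> Gm"
      by (auto simp: SG_carrier)
    show "\<iota> (s \<otimes>\<^bsub>SG\<^esub> t) = \<iota> s \<otimes> \<iota> t"
      using s t by (simp add: conjg_def m_assoc)
  qed
  show "bij_betw \<iota> (carrier SG) (carrier G)"
    unfolding bij_betw_def
  proof
    show "inj_on \<iota> (carrier SG)"
    proof (rule inj_onI)
      fix s t assume "s \<in> carrier SG" "t \<in> carrier SG" and e: "\<iota> s = \<iota> t"
      then obtain a x b y where s: "s = (a, x)" "a \<in> AA" "x \<in> Gm" and t: "t = (b, y)" "b \<in> AA" "y \<in> Gm"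
        by (auto simp: SG_carrier)
      have "a = b \<and> x = y" by (rule DG.dec_unique[OF s(2) t(2) s(3) t(3)]) (use e s t in simp)
      then show "s = t" using s t by simp
    qed
    show "\<iota> ` carrier SG = carrier G"
    proof
      show "\<iota> ` carrier SG \<subseteq> carrier G" by (auto simp: SG_carrier)
      show "carrier G \<subseteq> \<iota> ` carrier SG"
      proof
        fix g assume "g \<in> carrier G"
        then obtain a x where "a \<in> AA" "x \<in> Gm" "g = a \<otimes> x" using DG.NKall by blast
        then show "g \<in> \<iota> ` carrier SG" by (intro image_eqI[of _ _ "(a, x)"]) (auto simp: SG_carrier)
      qed
    qed
  qed
qed

lemma iota_inv: "a \<in> AA \<Longrightarrow> x \<in> Gm \<Longrightarrow> g = a \<otimes> x \<Longrightarrow> inv_into (carrier SG) \<iota> g = (a, x)"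
  using iota_iso by (intro inv_into_f_eq) (auto simp: iso_def bij_betw_def SG_carrier)

lemma iota_inv_iso: "inv_into (carrier SG) \<iota> \<in> iso G SG"
  by (rule I.S.iso_set_sym[OF iota_iso])

end

locale ftripF = ftrip +
  fixes F assumes Feq: "F_eq G Gp Gm \<xi> \<eta> F"
begin

lemma Fe: "u \<in> Gp \<Longrightarrow> x \<in> Gm \<Longrightarrow> F (u \<otimes> inv (\<xi> u) \<otimes> x) = \<eta> u \<otimes> inv u \<otimes> x"
  using Feq unfolding F_eq_def by simp

lemma FA: "u \<in> Gp \<Longrightarrow> F (u \<otimes> inv (\<xi> u)) = \<eta> u \<otimes> inv u"
  using Fe[of u \<one>] by simp

lemma FGm: "x \<in> Gm \<Longrightarrow> F x = x"
  using Fe[of \<one> x] by simp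

lemma FAx: assumes a: "a \<in> AA" and x: "x \<in> Gm" shows "F (a \<otimes> x) = F a \<otimes> x"
proof -
  obtain u where u: "u \<in> Gp" "a = u \<otimes> inv (\<xi> u)" using a AA_mem by blast
  show ?thesis using Fe[OF u(1) x] FA[OF u(1)] u(2) by simp
qed

lemma FAc: assumes a: "a \<in> AA" shows "F a \<in> carrier G"
proof -
  obtain u where u: "u \<in> Gp" "a = u \<otimes> inv (\<xi> u)" using a AA_mem by blast
  show ?thesis using FA[OF u(1)] u by simp
qed

lemma FA_mult: assumes a: "a \<in> AA" and b: "b \<in> AA" shows "F (a \<otimes> b) = F a \<otimes> F b"
proof -
  obtain f where f: "f \<in> iso AG (G\<lparr>carrier := A2\<rparr>)" "\<forall>u\<in>Gp. f (u \<otimes> \<xi> (inv u)) = \<eta> u \<otimes> inv u"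
    using f_ex by blast
  have fF: "f c = F c" if c: "c \<in> AA" for c
  proof -
    obtain u where u: "u \<in> Gp" "c = u \<otimes> inv (\<xi> u)" using c AA_mem by blast
    show ?thesis using f(2) u FA[OF u(1)] by simp
  qed
  have "f (a \<otimes> b) = f a \<otimes> f b" using f(1) a b by (simp add: iso_def hom_def)
  then show ?thesis using a b fF by simp
qed

lemma Fb: assumes a: "a \<in> AA" shows "F a \<otimes> a \<in> Gm"
proof -
  obtain u where u: "u \<in> Gp" "a = u \<otimes> inv (\<xi> u)" using a AA_mem by blast
  have "F a \<otimes> a = \<eta> u \<otimes> inv (\<xi> u)" using FA[OF u(1)] u by (simp add: m_assoc)
  then show ?thesis using u by simp
qed

lemma Fconj: assumes x: "x \<in> Gm" and a: "a \<in> AA" shows "F (x \<otimes> a \<otimes> inv x) = x \<otimes> F a \<otimes> inv x"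
proof -
  obtain v where v: "v \<in> Gp" "a = v \<otimes> inv (\<xi> v)" using a AA_mem by blast
  have xvc: "x \<otimes> v \<in> carrier G" using x v by simp
  obtain v' x' where v': "v' \<in> Gp" "x' \<in> Gm" "x \<otimes> v = v' \<otimes> x'" using pm_ex[OF xvc] by blast
  have xa: "x \<otimes> a \<otimes> inv x \<in> AA" using DG.Nconj[of x a] x a by simp
  then obtain w where w: "w \<in> Gp" "x \<otimes> a \<otimes> inv x = w \<otimes> inv (\<xi> w)" using AA_mem by blast
  have "x \<otimes> a \<otimes> inv x = (x \<otimes> v) \<otimes> (inv (\<xi> v) \<otimes> inv x)" using x v by (simp add: m_assoc)
  also have "\<dots> = v' \<otimes> (x' \<otimes> inv (\<xi> v) \<otimes> inv x)" using x v v' by (simp add: m_assoc)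
  finally have "w \<otimes> inv (\<xi> w) = v' \<otimes> (x' \<otimes> inv (\<xi> v) \<otimes> inv x)" using w by simp
  then have "w = v' \<and> inv (\<xi> w) = x' \<otimes> inv (\<xi> v) \<otimes> inv x"
    by (intro pm_unique) (use w v v' x in simp_all)
  then have wv: "w = v'" by simp
  have lhs: "F (x \<otimes> a \<otimes> inv x) = \<eta> v' \<otimes> inv v'" using w wv FA by simp
  have fa: "F a = \<eta> v \<otimes> inv v" using FA[OF v(1)] v(2) by simp
  have "\<eta> v \<otimes> inv v \<in> A2" using v A2_mem by blast
  then have "x \<otimes> (\<eta> v \<otimes> inv v) \<otimes> inv x \<in> A2" using A2_normal_conj x by simp
  then obtain w2 where w2: "w2 \<in> Gp" "x \<otimes> (\<eta> v \<otimes> inv v) \<otimes> inv x = \<eta> w2 \<otimes> inv w2" using A2_mem by blast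
  have iv: "inv v \<otimes> inv x = inv x' \<otimes> inv v'"
  proof -
    have "inv (x \<otimes> v) = inv (v' \<otimes> x')" using v' by simp
    then show ?thesis using x v(1) v'(1,2) by (simp add: inv_mult_group)
  qed
  have "x \<otimes> (\<eta> v \<otimes> inv v) \<otimes> inv x = x \<otimes> \<eta> v \<otimes> (inv v \<otimes> inv x)" using x v by (simp add: m_assoc)
  also have "\<dots> = (x \<otimes> \<eta> v \<otimes> inv x') \<otimes> inv v'" using x v v' by (simp add: iv m_assoc)
  finally have "(x \<otimes> \<eta> v \<otimes> inv x') \<otimes> inv v' = \<eta> w2 \<otimes> inv w2" using w2 by simp
  then have "x \<otimes> \<eta> v \<otimes> inv x' = \<eta> w2 \<and> inv v' = inv w2"
    by (intro mp_unique) (use w2 v v' x in simp_all)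
  then have "v' = w2" using v' w2 by (metis Gpc inv_inv)
  then have "x \<otimes> F a \<otimes> inv x = \<eta> v' \<otimes> inv v'" using w2 fa x v by (simp add: m_assoc)
  then show ?thesis using lhs by simp
qed

lemma Fhom: "F \<in> hom G G"
proof (rule homI)
  fix g assume "g \<in> carrier G"
  then obtain a x where ax: "a \<in> AA" "x \<in> Gm" "g = a \<otimes> x" using DG.NKall by blast
  show "F g \<in> carrier G" using ax FAx FAc by simp
next
  fix g h assume "g \<in> carrier G" "h \<in> carrier G"
  then obtain a x b y where ax: "a \<in> AA" "x \<in> Gm" "g = a \<otimes> x" and hb: "b \<in> AA" "y \<in> Gm" "h = b \<otimes> y"
    using DG.NKall by metis
  have c: "x \<otimes> b \<otimes> inv x \<in> AA" using DG.Nconj[of x b] ax hb by simp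
  have "(a \<otimes> x) \<otimes> (b \<otimes> y) = (a \<otimes> (x \<otimes> b \<otimes> inv x)) \<otimes> (x \<otimes> y)"
    using ax(1,2) hb(1,2) by (simp add: m_assoc)
  then have "F ((a \<otimes> x) \<otimes> (b \<otimes> y)) = F (a \<otimes> (x \<otimes> b \<otimes> inv x)) \<otimes> (x \<otimes> y)"
    using FAx ax(1,2) hb(1,2) c by simp
  also have "\<dots> = F a \<otimes> (x \<otimes> F b \<otimes> inv x) \<otimes> (x \<otimes> y)"
    using FA_mult[OF ax(1) c] Fconj[OF ax(2) hb(1)] by simp
  also have "\<dots> = (F a \<otimes> x) \<otimes> (F b \<otimes> y)" using ax(1,2) hb(1,2) FAc by (simp add: m_assoc)
  also have "\<dots> = F (a \<otimes> x) \<otimes> F (b \<otimes> y)" using ax(1,2) hb(1,2) FAx by simp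
  finally show "F (g \<otimes> h) = F g \<otimes> F h" using ax(3) hb(3) by simp
qed

lemma decautG: "dec_aut G AA Gm F"
proof (intro dec_aut.intro dec_aut_axioms.intro)
  show "dec G AA Gm" by (rule decG)
  show "F \<in> hom G G" by (rule Fhom)
  show "F k = k" if "k \<in> Gm" for k using that by (rule FGm)
  show "F a \<otimes> a \<in> Gm" if "a \<in> AA" for a using that by (rule Fb)
qed

sublocale DF: dec_aut G AA Gm F by (rule decautG)

end


context ftrip begin

lemma AA_img: "AA = (\<lambda>u. u \<otimes> inv (\<xi> u)) ` Gp"
  by (rule Set.set_eqI) (simp add: AA_mem image_iff)

end

context ftripF begin

lemma part3_main: assumes z: "zeta_eq G Gp \<xi> \<zeta>"
  shows "cycle_triple AG HG (conjg G) \<zeta> (\<lambda>s. inv_into (carrier SG) \<iota> (F (\<iota> s))) \<and>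
        \<iota> ` Gplus_of AG HG (conjg G) \<zeta> = Gp \<and>
        (\<forall>g\<in>Gplus_of AG HG (conjg G) \<zeta>.
           \<iota> (xi_of AG HG g) = \<xi> (\<iota> g) \<and>
           \<iota> (eta_of AG HG (conjg G) (\<lambda>s. inv_into (carrier SG) \<iota> (F (\<iota> s))) g) = \<eta> (\<iota> g))"
proof -
  define FS where "FS = (\<lambda>s. inv_into (carrier SG) \<iota> (F (\<iota> s)))"
  have FS_iso: "FS \<in> iso SG SG"
  proof -
    have "FS = inv_into (carrier SG) \<iota> \<circ> (F \<circ> \<iota>)" by (simp add: FS_def fun_eq_iff)
    then show ?thesis using iso_set_trans[OF iso_set_trans[OF iota_iso DF.F_iso] iota_inv_iso] by simp
  qed
  have FS_H: "FS (inH AG HG x) = inH AG HG x" if x: "x \<in> carrier HG" for x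
  proof -
    have "FS (inH AG HG x) = inv_into (carrier SG) \<iota> x" using x by (simp add: FS_def inH_def FGm)
    also have "\<dots> = (\<one>, x)" by (rule iota_inv) (use x in simp_all)
    finally show ?thesis by (simp add: inH_def)
  qed
  have FS_b: "FS (inA AG HG a) \<otimes>\<^bsub>SG\<^esub> inA AG HG a \<in> inH AG HG ` carrier HG" if a: "a \<in> carrier AG" for a
  proof -
    have aA: "a \<in> AA" using a by simp
    have ih: "inv_into (carrier SG) \<iota> \<in> hom G SG" using iota_inv_iso by (simp add: iso_def)
    have i1: "inv_into (carrier SG) \<iota> a = (a, \<one>)" by (rule iota_inv) (use aA in simp_all)
    have t: "F a \<otimes> a \<in> Gm" using aA by (rule Fb)
    have i2: "inv_into (carrier SG) \<iota> (F a \<otimes> a) = (\<one>, F a \<otimes> a)" by (rule iota_inv) (use t in simp_all)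
    have "FS (inA AG HG a) = inv_into (carrier SG) \<iota> (F a)" using aA by (simp add: FS_def inA_def)
    then have "FS (inA AG HG a) \<otimes>\<^bsub>SG\<^esub> inA AG HG a =
       inv_into (carrier SG) \<iota> (F a) \<otimes>\<^bsub>SG\<^esub> inv_into (carrier SG) \<iota> a"
      using i1 by (simp add: inA_def)
    also have "\<dots> = inv_into (carrier SG) \<iota> (F a \<otimes> a)"
      using ih aA FAc[OF aA] by (simp add: hom_def)
    also have "\<dots> = inH AG HG (F a \<otimes> a)" using i2 by (simp add: inH_def)
    finally show ?thesis using t by simp
  qed
  have fin: "finite (carrier SG)"
  proof -
    have "finite AA" using finG by (rule finite_subset[rotated]) auto
    moreover have "finite Gm" using finG by (rule finite_subset[rotated]) auto
    ultimately show ?thesis by (simp add: SG_carrier)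
  qed
  have ct: "cycle_triple AG HG (conjg G) \<zeta> FS"
    unfolding cycle_triple_def
    using act_G fin one_cyc[OF z] FS_iso FS_H FS_b by simp
  interpret C: ctrip AG HG "conjg G" \<zeta> FS by (rule ctrip_of[OF ct])
  have Gpl: "Gplus_of AG HG (conjg G) \<zeta> = (\<lambda>a. (a, \<zeta> a)) ` AA" using C.Gp_img by simp
  have img: "\<iota> ` Gplus_of AG HG (conjg G) \<zeta> = Gp"
  proof -
    have "\<iota> ` Gplus_of AG HG (conjg G) \<zeta> = \<iota> ` ((\<lambda>a. (a, \<zeta> a)) ` AA)" by (simp only: Gpl)
    also have "\<dots> = (\<lambda>a. a \<otimes> \<zeta> a) ` AA" by (simp add: image_image)
    also have "\<dots> = (\<lambda>u. (u \<otimes> inv (\<xi> u)) \<otimes> \<zeta> (u \<otimes> inv (\<xi> u))) ` Gp"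
      by (simp only: AA_img image_image)
    also have "\<dots> = (\<lambda>u. u) ` Gp"
      by (rule image_cong) (simp_all add: zeta_props[OF z] m_assoc)
    finally show ?thesis by simp
  qed
  have each: "\<iota> (xi_of AG HG g) = \<xi> (\<iota> g) \<and> \<iota> (eta_of AG HG (conjg G) FS g) = \<eta> (\<iota> g)"
    if g: "g \<in> Gplus_of AG HG (conjg G) \<zeta>" for g
  proof -
    obtain a where a: "a \<in> AA" "g = (a, \<zeta> a)" using g Gpl by blast
    obtain u where u: "u \<in> Gp" "a = u \<otimes> inv (\<xi> u)" using a(1) AA_mem by blast
    have za: "\<zeta> a = \<xi> u" using zeta_props[OF z u(1)] u(2) by simp
    have ig: "\<iota> g = u" using a(2) u za by (simp add: m_assoc)
    have gc: "g \<in> carrier SG" using a za u by (simp add: SG_carrier)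
    have x: "\<iota> (xi_of AG HG g) = \<xi> (\<iota> g)" using a(2) za ig u(1) by (simp add: xi_of_def)
    have Fa: "F a = \<eta> u \<otimes> inv u" using FA[OF u(1)] u(2) by simp
    have "a = F (F a)" using DF.invol_N[OF a(1)] by simp
    also have "\<dots> = F (\<eta> u) \<otimes> F (inv u)" using Fa u(1) by (simp add: DF.Fm)
    also have "\<dots> = \<eta> u \<otimes> F (inv u)" using u(1) by (simp add: FGm)
    finally have "a = \<eta> u \<otimes> F (inv u)" .
    then have Fiu: "F (inv u) = inv (\<eta> u) \<otimes> a" using u(1) a(1) by (simp add: inv_solve_left)
    have "F u = inv (F (inv u))" using DF.Finv[of "inv u"] u(1) by simp
    also have "\<dots> = inv a \<otimes> \<eta> u" using Fiu u(1) a(1) by (simp add: inv_mult_group)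
    finally have Fu: "F u = inv a \<otimes> \<eta> u" .
    have "FS g = inv_into (carrier SG) \<iota> (inv a \<otimes> \<eta> u)" using ig Fu by (simp add: FS_def)
    also have "\<dots> = (inv a, \<eta> u)" by (rule iota_inv) (use a(1) u(1) in simp_all)
    finally have "FS g = (inv a, \<eta> u)" .
    then have "eta_of AG HG (conjg G) FS g = (\<one>, \<eta> u)" using C.eta_eq[OF gc] by simp
    then have "\<iota> (eta_of AG HG (conjg G) FS g) = \<eta> (\<iota> g)" using ig u(1) by simp
    with x show ?thesis by simp
  qed
  show ?thesis using ct img each unfolding FS_def by blast
qed

end

lemma part1: "factorization_triple G Gp Gm \<xi> \<eta> \<Longrightarrow>
      (let A = plus1 G Gp \<xi>; AG = G\<lparr>carrier := A\<rparr>; HG = G\<lparr>carrier := Gm\<rparr> in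
        action_by_aut HG AG (conjg G) \<and>
        (\<lambda>s. fst s \<otimes>\<^bsub>G\<^esub> snd s) \<in> iso (semidirect AG HG (conjg G)) G \<and>
        (\<exists>\<zeta>. zeta_eq G Gp \<xi> \<zeta> \<and> one_cycle AG HG (conjg G) \<zeta>) \<and>
        (\<exists>F. F_eq G Gp Gm \<xi> \<eta> F \<and> F \<in> iso G G \<and>
             (\<forall>x\<in>Gm. F x = x) \<and> (\<forall>a\<in>A. F a \<otimes>\<^bsub>G\<^esub> a \<in> Gm)))"
proof -
  assume ft: "factorization_triple G Gp Gm \<xi> \<eta>"
  interpret ftrip G Gp Gm \<xi> \<eta> by (rule ftrip.intro) (rule ft)
  obtain \<zeta> where z: "zeta_eq G Gp \<xi> \<zeta>" using zeta_exists by blast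
  obtain F where hFe: "F_eq G Gp Gm \<xi> \<eta> F" using F_exists by blast
  interpret ftripF G Gp Gm \<xi> \<eta> F by (intro ftripF.intro ftripF_axioms.intro ftrip.intro ft hFe)
  have e1: "\<exists>\<zeta>. zeta_eq G Gp \<xi> \<zeta> \<and> one_cycle (G\<lparr>carrier := plus1 G Gp \<xi>\<rparr>) (G\<lparr>carrier := Gm\<rparr>) (conjg G) \<zeta>"
    using z one_cyc[OF z] by blast
  have e2: "\<exists>F. F_eq G Gp Gm \<xi> \<eta> F \<and> F \<in> iso G G \<and> (\<forall>x\<in>Gm. F x = x) \<and>
      (\<forall>a\<in>plus1 G Gp \<xi>. F a \<otimes>\<^bsub>G\<^esub> a \<in> Gm)"
    apply (rule exI[of _ F])
    apply (intro conjI ballI)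
       apply (rule hFe)
      apply (rule DF.F_iso)
     apply (erule FGm)
    apply (erule Fb)
    done
  show ?thesis unfolding Let_def using act_G iota_iso e1 e2 by simp
qed

lemma part3: "factorization_triple G Gp Gm \<xi> \<eta> \<and> zeta_eq G Gp \<xi> \<zeta> \<and> F_eq G Gp Gm \<xi> \<eta> F \<Longrightarrow>
      (let A = plus1 G Gp \<xi>; AG = G\<lparr>carrier := A\<rparr>; HG = G\<lparr>carrier := Gm\<rparr>;
           S = semidirect AG HG (conjg G);
           \<iota> = (\<lambda>s. fst s \<otimes>\<^bsub>G\<^esub> snd s);
           FS = (\<lambda>s. inv_into (carrier S) \<iota> (F (\<iota> s))) in
        cycle_triple AG HG (conjg G) \<zeta> FS \<and>
        \<iota> ` Gplus_of AG HG (conjg G) \<zeta> = Gp \<and>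
        (\<forall>g\<in>Gplus_of AG HG (conjg G) \<zeta>.
           \<iota> (xi_of AG HG g) = \<xi> (\<iota> g) \<and> \<iota> (eta_of AG HG (conjg G) FS g) = \<eta> (\<iota> g)))"
proof -
  assume h: "factorization_triple G Gp Gm \<xi> \<eta> \<and> zeta_eq G Gp \<xi> \<zeta> \<and> F_eq G Gp Gm \<xi> \<eta> F"
  then have ft: "factorization_triple G Gp Gm \<xi> \<eta>" and z: "zeta_eq G Gp \<xi> \<zeta>" and hFe: "F_eq G Gp Gm \<xi> \<eta> F"
    by simp_all
  interpret ftripF G Gp Gm \<xi> \<eta> F by (intro ftripF.intro ftripF_axioms.intro ftrip.intro ft hFe)
  show ?thesis unfolding Let_def using part3_main[OF z] by simp
qed

theorem theorem2:
  shows
  "(\<forall>(G::('g, 'm) monoid_scheme) Gp Gm \<xi> \<eta>.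
      factorization_triple G Gp Gm \<xi> \<eta> \<longrightarrow>
      (let A = plus1 G Gp \<xi>; AG = G\<lparr>carrier := A\<rparr>; HG = G\<lparr>carrier := Gm\<rparr> in
        action_by_aut HG AG (conjg G) \<and>
        (\<lambda>s. fst s \<otimes>\<^bsub>G\<^esub> snd s) \<in> iso (semidirect AG HG (conjg G)) G \<and>
        (\<exists>\<zeta>. zeta_eq G Gp \<xi> \<zeta> \<and> one_cycle AG HG (conjg G) \<zeta>) \<and>
        (\<exists>F. F_eq G Gp Gm \<xi> \<eta> F \<and> F \<in> iso G G \<and>
             (\<forall>x\<in>Gm. F x = x) \<and> (\<forall>a\<in>A. F a \<otimes>\<^bsub>G\<^esub> a \<in> Gm))))
   \<and>
   (\<forall>(A::('a, 'b) monoid_scheme) (H::('h, 'c) monoid_scheme) \<phi> \<zeta> F.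
      cycle_triple A H \<phi> \<zeta> F \<longrightarrow>
      factorization_triple (semidirect A H \<phi>) (Gplus_of A H \<phi> \<zeta>) (Gminus_of A H)
        (xi_of A H) (eta_of A H \<phi> F))
   \<and>
   (\<forall>(G::('g, 'm) monoid_scheme) Gp Gm \<xi> \<eta> \<zeta> F.
      factorization_triple G Gp Gm \<xi> \<eta> \<and> zeta_eq G Gp \<xi> \<zeta> \<and> F_eq G Gp Gm \<xi> \<eta> F \<longrightarrow>
      (let A = plus1 G Gp \<xi>; AG = G\<lparr>carrier := A\<rparr>; HG = G\<lparr>carrier := Gm\<rparr>;
           S = semidirect AG HG (conjg G);
           \<iota> = (\<lambda>s. fst s \<otimes>\<^bsub>G\<^esub> snd s);
           FS = (\<lambda>s. inv_into (carrier S) \<iota> (F (\<iota> s))) in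
        cycle_triple AG HG (conjg G) \<zeta> FS \<and>
        \<iota> ` Gplus_of AG HG (conjg G) \<zeta> = Gp \<and>
        (\<forall>g\<in>Gplus_of AG HG (conjg G) \<zeta>.
           \<iota> (xi_of AG HG g) = \<xi> (\<iota> g) \<and> \<iota> (eta_of AG HG (conjg G) FS g) = \<eta> (\<iota> g))))
   \<and>
   (\<forall>(A::('a, 'b) monoid_scheme) (H::('h, 'c) monoid_scheme) \<phi> \<zeta> F.
      cycle_triple A H \<phi> \<zeta> F \<longrightarrow>
      (let S = semidirect A H \<phi>; Gp = Gplus_of A H \<phi> \<zeta>; Gm = Gminus_of A H;
           \<xi> = xi_of A H; \<eta> = eta_of A H \<phi> F in
        plus1 S Gp \<xi> = inA A H ` carrier A \<and>
        (\<forall>x\<in>carrier H. \<forall>a\<in>carrier A. conjg S (inH A H x) (inA A H a) = inA A H (\<phi> x a)) \<and>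
        (\<forall>\<zeta>'. zeta_eq S Gp \<xi> \<zeta>' \<longrightarrow> (\<forall>a\<in>carrier A. \<zeta>' (inA A H a) = inH A H (\<zeta> a))) \<and>
        (\<forall>F'. F_eq S Gp Gm \<xi> \<eta> F' \<longrightarrow> (\<forall>s\<in>carrier S. F' s = F s))))"
  apply (intro conjI allI impI)
     apply (erule part1)
    apply (erule part2)
   apply (erule part3)
  apply (erule part4)
  done

end
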